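(* Let $K$ be a field, $R=K[x_1,\ldots,x_n]$, $\prec$ an admissible monomial ordering on $R$, and $\mathcal{L}$ an involutive division of the class described in the context (determined by a permutation $\rho$ of $\{1,\ldots,n\}$ and a total monomial ordering $\sqsupset$ which is either admissible or the inverse of an admissible ordering). Let $G=\{g_1,\ldots,g_k\}$ be a minimal Gröbner basis of an ideal $I\subset R$ with respect to $\prec$, and for $i=1,\ldots,n$ let $h_i=\max_{g\in G}\deg_i(\mathrm{LM}(g))$. Then the set of products $$\bar G=\{\, m g \mid g\in G,\ m \text{ a monomial such that } \deg_i(m)\le h_i-\deg_i(\mathrm{LM}(g)) \text{ for all } i=1,\ldots,n\,\}$$ is an $\mathcal{L}$-involutive basis of $I$ with respect to $\prec$.
   Context: For a monomial $u=x_1^{\alpha_1}\cdots x_n^{\alpha_n}$, $\deg_i(u)=\alpha_i$; $\mathrm{LM}(f)$ denotes the leading monomial of $f$ with respect to $\prec$. The involutive division $\mathcal{L}$ is defined as follows. Fix a permutation $\rho$ of $\{1,\ldots,n\}$ and a total ordering $\sqsupset$ on monomials that is either an admissible monomial ordering or the inverse of one. For a finite set $U$ of monomials and $u,v\in U$, set $NM(u,\{u,v\})=\emptyset$ if $u\sqsupset v$ or ($u\sqsubset v$ and $v$ divides $u$); otherwise $NM(u,\{u,v\})=\{x_{\rho(i)}\}$ where $i=\min\{j \mid \deg_{\rho(j)}(u)<\deg_{\rho(j)}(v)\}$. The set of nonmultiplicative variables of $u\in U$ is $NM_{\mathcal{L}}(u,U)=\bigcup_{v\in U\setminus\{u\}}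 NM(u,\{u,v\})$, and the remaining variables form the set $M_{\mathcal{L}}(u,U)$ of multiplicative variables. Let $\mathcal{L}(u,U)$ be the set of all monomials in the variables of $M_{\mathcal{L}}(u,U)$. For $u\in U$ and a monomial $w$, $u$ is an $\mathcal{L}$-divisor of $w$ (written $u\mid_{\mathcal{L}} w$) if $w\in u\,\mathcal{L}(u,U)$. (For example, $\sqsupset=\succ_{\mathrm{lex}}$ with $\rho$ the identity gives Janet division.) A finite set $G'\subset I$ is an $\mathcal{L}$-involutive basis of $I$ with respect to $\prec$ if for every nonzero $f\in I$ there exists $g\in G'$ with $\mathrm{LM}(g)\mid_{\mathcal{L}}\mathrm{LM}(f)$, where the involutive divisibility is taken with respect to $U=\mathrm{LM}(G')=\{\mathrm{LM}(g)\mid g\in G'\}$. *)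

theory Defs
  imports Main "HOL-Library.Poly_Mapping"
begin

text \<open>Monomials in x_0,...,x_(n-1) are exponent vectors (nat =>0 nat) with Poly_Mapping.keys in {..<n};
polynomials over a field are finitely supported maps from monomials to coefficients
((nat =>0 nat) =>0 'a), with the convolution product of Poly_Mapping.
Variable x_(i+1) of the paper is the index i here.\<close>

type_synonym mon = "nat \<Rightarrow>\<^sub>0 nat"
type_synonym 'a mpoly = "mon \<Rightarrow>\<^sub>0 'a"

definition monomials :: "nat \<Rightarrow> mon set" where
  "monomials n = {t. Poly_Mapping.keys t \<subseteq> {..<n}}"

definition polys :: "nat \<Rightarrow> ('a::zero) mpoly set" where
  "polys n = {p. \<forall>t\<in>Poly_Mapping.keys p. t \<in> monomials n}"

definition mdvd :: "mon \<Rightarrow> mon \<Rightarrow> bool" where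
  "mdvd v u \<longleftrightarrow> (\<forall>i. Poly_Mapping.lookup v i \<le> Poly_Mapping.lookup u i)"

definition deg :: "nat \<Rightarrow> mon \<Rightarrow> nat" where
  "deg i u = Poly_Mapping.lookup u i"

definition admissible :: "nat \<Rightarrow> (mon \<Rightarrow> mon \<Rightarrow> bool) \<Rightarrow> bool" where
  "admissible n ord \<longleftrightarrow>
     (\<forall>s\<in>monomials n. \<not> ord s s) \<and>
     (\<forall>s\<in>monomials n. \<forall>t\<in>monomials n. \<forall>u\<in>monomials n. ord s t \<longrightarrow> ord t u \<longrightarrow> ord s u) \<and>
     (\<forall>s\<in>monomials n. \<forall>t\<in>monomials n. s = t \<or> ord s t \<or> ord t s) \<and>
     (\<forall>t\<in>monomials n. t \<noteq> 0 \<longrightarrow> ord 0 t) \<and>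
     (\<forall>s\<in>monomials n. \<forall>t\<in>monomials n. \<forall>w\<in>monomials n. ord s t \<longrightarrow> ord (s + w) (t + w))"

definition LM :: "(mon \<Rightarrow> mon \<Rightarrow> bool) \<Rightarrow> ('a::zero) mpoly \<Rightarrow> mon" where
  "LM ord f = (THE t. t \<in> Poly_Mapping.keys f \<and> (\<forall>s\<in>Poly_Mapping.keys f. s \<noteq> t \<longrightarrow> ord s t))"

definition LC :: "(mon \<Rightarrow> mon \<Rightarrow> bool) \<Rightarrow> ('a::zero) mpoly \<Rightarrow> 'a" where
  "LC ord f = Poly_Mapping.lookup f (LM ord f)"

definition is_ideal :: "nat \<Rightarrow> ('a::comm_ring_1) mpoly set \<Rightarrow> bool" where
  "is_ideal n I \<longleftrightarrow> I \<subseteq> polys n \<and> 0 \<in> I \<and>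
     (\<forall>f\<in>I. \<forall>g\<in>I. f + g \<in> I) \<and> (\<forall>p\<in>polys n. \<forall>f\<in>I. p * f \<in> I)"

definition groebner_basis :: "nat \<Rightarrow> (mon \<Rightarrow> mon \<Rightarrow> bool) \<Rightarrow> ('a::comm_ring_1) mpoly set \<Rightarrow> 'a mpoly set \<Rightarrow> bool" where
  "groebner_basis n ord G I \<longleftrightarrow> finite G \<and> G \<subseteq> I \<and> 0 \<notin> G \<and>
     (\<forall>f\<in>I. f \<noteq> 0 \<longrightarrow> (\<exists>g\<in>G. mdvd (LM ord g) (LM ord f)))"

definition minimal_groebner_basis :: "nat \<Rightarrow> (mon \<Rightarrow> mon \<Rightarrow> bool) \<Rightarrow> ('a::comm_ring_1) mpoly set \<Rightarrow> 'a mpoly set \<Rightarrow> bool" where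
  "minimal_groebner_basis n ord G I \<longleftrightarrow> groebner_basis n ord G I \<and>
     (\<forall>g\<in>G. LC ord g = 1) \<and>
     (\<forall>g\<in>G. \<forall>g'\<in>G. g \<noteq> g' \<longrightarrow> \<not> mdvd (LM ord g') (LM ord g))"

text \<open>The division L. sq u v means u \<sqsupset> v; rho is a permutation of {..<n}
(0-indexed). NM2 u v is NM(u,{u,v}).\<close>
definition NM2 :: "nat \<Rightarrow> (mon \<Rightarrow> mon \<Rightarrow> bool) \<Rightarrow> (nat \<Rightarrow> nat) \<Rightarrow> mon \<Rightarrow> mon \<Rightarrow> nat set" where
  "NM2 n sq \<rho> u v =
     (if sq u v \<or> (sq v u \<and> mdvd v u) then {}
      else {\<rho> (LEAST j. j < n \<and> deg (\<rho> j) u < deg (\<rho> j) v)})"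

definition NM_L :: "nat \<Rightarrow> (mon \<Rightarrow> mon \<Rightarrow> bool) \<Rightarrow> (nat \<Rightarrow> nat) \<Rightarrow> mon \<Rightarrow> mon set \<Rightarrow> nat set" where
  "NM_L n sq \<rho> u U = (\<Union>v\<in>U - {u}. NM2 n sq \<rho> u v)"

definition M_L :: "nat \<Rightarrow> (mon \<Rightarrow> mon \<Rightarrow> bool) \<Rightarrow> (nat \<Rightarrow> nat) \<Rightarrow> mon \<Rightarrow> mon set \<Rightarrow> nat set" where
  "M_L n sq \<rho> u U = {..<n} - NM_L n sq \<rho> u U"

text \<open>u is an L-divisor of w (relative to U): w \<in> u * L(u,U).\<close>
definition L_divides :: "nat \<Rightarrow> (mon \<Rightarrow> mon \<Rightarrow> bool) \<Rightarrow> (nat \<Rightarrow> nat) \<Rightarrow> mon set \<Rightarrow> mon \<Rightarrow> mon \<Rightarrow> bool" where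
  "L_divides n sq \<rho> U u w \<longleftrightarrow> (\<exists>m. Poly_Mapping.keys m \<subseteq> M_L n sq \<rho> u U \<and> w = u + m)"

definition L_involutive_basis :: "nat \<Rightarrow> (mon \<Rightarrow> mon \<Rightarrow> bool) \<Rightarrow> (nat \<Rightarrow> nat) \<Rightarrow>
    (mon \<Rightarrow> mon \<Rightarrow> bool) \<Rightarrow> ('a::comm_ring_1) mpoly set \<Rightarrow> 'a mpoly set \<Rightarrow> bool" where
  "L_involutive_basis n sq \<rho> ord G' I \<longleftrightarrow> finite G' \<and> G' \<subseteq> I \<and>
     (\<forall>f\<in>I. f \<noteq> 0 \<longrightarrow>
        (\<exists>g\<in>G'. L_divides n sq \<rho> (LM ord ` G') (LM ord g) (LM ord f)))"

end

theory Submission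
  imports Defs
begin

lemma mon_iff: "t \<in> monomials n \<longleftrightarrow> (\<forall>k. n \<le> k \<longrightarrow> Poly_Mapping.lookup t k = 0)"
  unfolding monomials_def
  by (auto simp: in_keys_iff) (metis not_le less_irrefl)

lemma lookup_single_mult:
  "Poly_Mapping.lookup (Poly_Mapping.single (m::mon) (1::'a::comm_ring_1) * g) (m + t) = Poly_Mapping.lookup g t"
proof -
  have e: "(m + t = m + q) = (t = q)" for q by simp
  show ?thesis by (simp add: lookup_mult lookup_single when_mult e)
qed

lemma keys_single_mult:
  "Poly_Mapping.keys (Poly_Mapping.single (m::mon) (1::'a::comm_ring_1) * g) = (\<lambda>t. m + t) ` Poly_Mapping.keys g"
proof
  have "Poly_Mapping.keys (Poly_Mapping.single m (1::'a)) \<subseteq> {m}" by simp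
  then show "Poly_Mapping.keys (Poly_Mapping.single m (1::'a) * g) \<subseteq> (\<lambda>t. m + t) ` Poly_Mapping.keys g"
    using keys_mult[of "Poly_Mapping.single m (1::'a)" g] by blast
  show "(\<lambda>t. m + t) ` Poly_Mapping.keys g \<subseteq> Poly_Mapping.keys (Poly_Mapping.single m (1::'a) * g)"
    by (auto simp: in_keys_iff lookup_single_mult)
qed

lemma adm_zero: "admissible n ord \<Longrightarrow> t \<in> monomials n \<Longrightarrow> t \<noteq> 0 \<Longrightarrow> ord 0 t"
  unfolding admissible_def by blast

lemma adm_mult: "admissible n ord \<Longrightarrow> s \<in> monomials n \<Longrightarrow> t \<in> monomials n \<Longrightarrow> w \<in> monomials n \<Longrightarrow> ord s t \<Longrightarrow> ord (s + w) (t + w)"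
  unfolding admissible_def by blast

lemma adm_asym:
  assumes "admissible n ord" "s \<in> monomials n" "t \<in> monomials n" "ord s t"
  shows "\<not> ord t s"
  using assms unfolding admissible_def by blast

lemma exists_max:
  assumes adm: "admissible n ord" and "finite A" "A \<noteq> {}" "A \<subseteq> monomials n"
  shows "\<exists>t\<in>A. \<forall>s\<in>A. s \<noteq> t \<longrightarrow> ord s t"
  using assms(2,3,4)
proof (induction A rule: finite_ne_induct)
  case (singleton x)
  then show ?case by auto
next
  case (insert x F)
  then obtain t where t: "t \<in> F" "\<forall>s\<in>F. s \<noteq> t \<longrightarrow> ord s t" by auto
  have xm: "x \<in> monomials n" and tm: "t \<in> monomials n" using insert t by auto
  have "x \<noteq> t" using insert t by auto
  then have "ord x t \<or> ord t x" using adm xm tm unfolding admissible_def by blast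
  then show ?case
  proof
    assume "ord x t" then show ?thesis using t by auto
  next
    assume tx: "ord t x"
    have "\<forall>s\<in>insert x F. s \<noteq> x \<longrightarrow> ord s x"
    proof (intro ballI impI)
      fix s assume s: "s \<in> insert x F" "s \<noteq> x"
      then have sF: "s \<in> F" by auto
      show "ord s x"
      proof (cases "s = t")
        case True then show ?thesis using tx by simp
      next
        case False
        then have "ord s t" using t sF by auto
        moreover have "s \<in> monomials n" using sF insert by auto
        ultimately show ?thesis using tx adm xm tm unfolding admissible_def by blast
      qed
    qed
    then show ?thesis by auto
  qed
qed

lemma LM_unique:
  assumes adm: "admissible n ord" and sub: "Poly_Mapping.keys f \<subseteq> monomials n"
    and t: "t \<in> Poly_Mapping.keys f" "\<forall>s\<in>Poly_Mapping.keys f. s \<noteq> t \<longrightarrow> ord s t"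
  shows "LM ord f = t"
  unfolding LM_def
proof (rule the_equality)
  show "t \<in> Poly_Mapping.keys f \<and> (\<forall>s\<in>Poly_Mapping.keys f. s \<noteq> t \<longrightarrow> ord s t)" using t by auto
next
  fix t' assume t': "t' \<in> Poly_Mapping.keys f \<and> (\<forall>s\<in>Poly_Mapping.keys f. s \<noteq> t' \<longrightarrow> ord s t')"
  show "t' = t"
  proof (rule ccontr)
    assume ne: "t' \<noteq> t"
    then have "ord t' t" "ord t t'" using t t' by auto
    then show False using adm_asym[OF adm] sub t t' by blast
  qed
qed

lemma LM_spec:
  assumes adm: "admissible n ord" and f: "f \<in> polys n" "f \<noteq> 0"
  shows "LM ord f \<in> Poly_Mapping.keys f \<and> (\<forall>s\<in>Poly_Mapping.keys f. s \<noteq> LM ord f \<longrightarrow> ord s (LM ord f))"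
proof -
  have sub: "Poly_Mapping.keys f \<subseteq> monomials n" using f unfolding polys_def by auto
  have "Poly_Mapping.keys f \<noteq> {}" using f by simp
  then obtain t where t: "t \<in> Poly_Mapping.keys f" "\<forall>s\<in>Poly_Mapping.keys f. s \<noteq> t \<longrightarrow> ord s t"
    using exists_max[OF adm finite_keys _ sub] by blast
  have "LM ord f = t" using LM_unique[OF adm sub t] .
  then show ?thesis using t by simp
qed

lemma monomials_add: "a \<in> monomials n \<Longrightarrow> b \<in> monomials n \<Longrightarrow> a + b \<in> monomials n"
  by (simp add: mon_iff lookup_add)

lemma LM_single_mult:
  assumes adm: "admissible n ord" and m: "m \<in> monomials n" and g: "g \<in> polys n" "(g::('a::field) mpoly) \<noteq> 0"
  shows "LM ord (Poly_Mapping.single m 1 * g) = m + LM ord g"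
proof -
  have sp: "LM ord g \<in> Poly_Mapping.keys g" "\<forall>s\<in>Poly_Mapping.keys g. s \<noteq> LM ord g \<longrightarrow> ord s (LM ord g)"
    using LM_spec[OF adm g] by auto
  have gsub: "Poly_Mapping.keys g \<subseteq> monomials n" using g unfolding polys_def by auto
  have K: "Poly_Mapping.keys (Poly_Mapping.single m (1::'a) * g) = (\<lambda>t. m + t) ` Poly_Mapping.keys g"
    by (rule keys_single_mult)
  show ?thesis
  proof (rule LM_unique[OF adm])
    show "Poly_Mapping.keys (Poly_Mapping.single m (1::'a) * g) \<subseteq> monomials n"
      unfolding K using gsub m monomials_add by blast
    show "m + LM ord g \<in> Poly_Mapping.keys (Poly_Mapping.single m (1::'a) * g)"
      unfolding K using sp by blast
    show "\<forall>s\<in>Poly_Mapping.keys (Poly_Mapping.single m (1::'a) * g). s \<noteq> m + LM ord g \<longrightarrow> ord s (m + LM ord g)"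
    proof (intro ballI impI)
      fix s assume s: "s \<in> Poly_Mapping.keys (Poly_Mapping.single m (1::'a) * g)" "s \<noteq> m + LM ord g"
      then obtain s' where s': "s' \<in> Poly_Mapping.keys g" "s = m + s'" unfolding K by blast
      then have "s' \<noteq> LM ord g" using s by auto
      then have "ord s' (LM ord g)" using sp s' by auto
      then have "ord (s' + m) (LM ord g + m)"
        using adm m gsub s' sp unfolding admissible_def by blast
      then show "ord s (m + LM ord g)" using s' by (simp add: add.commute)
    qed
  qed
qed


theorem proposition1:
  fixes n :: nat
    and ord :: "mon \<Rightarrow> mon \<Rightarrow> bool"
    and sq :: "mon \<Rightarrow> mon \<Rightarrow> bool"
    and \<rho> :: "nat \<Rightarrow> nat"
    and I G :: "('a::field) mpoly set"
    and h :: "nat \<Rightarrow> nat"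
  assumes "admissible n ord"
    and "bij_betw \<rho> {..<n} {..<n}"
    and "admissible n sq \<or> admissible n (\<lambda>u v. sq v u)"
    and "is_ideal n I"
    and "minimal_groebner_basis n ord G I"
    and "\<And>i. h i = Max ((\<lambda>g. deg i (LM ord g)) ` G)"
  shows "L_involutive_basis n sq \<rho> ord
           {Poly_Mapping.single m 1 * g | m g. g \<in> G \<and> m \<in> monomials n \<and>
              (\<forall>i<n. deg i m \<le> h i - deg i (LM ord g))} I"
proof -
  note adm = assms(1)
  define G' where "G' = {Poly_Mapping.single m (1::'a) * g | m g. g \<in> G \<and> m \<in> monomials n \<and>
              (\<forall>i<n. deg i m \<le> h i - deg i (LM ord g))}"
  define U where "U = LM ord ` G'"
  have finG: "finite G" and GI: "G \<subseteq> I" and G0: "0 \<notin> G"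
    and GB: "\<forall>f\<in>I. f \<noteq> 0 \<longrightarrow> (\<exists>g\<in>G. mdvd (LM ord g) (LM ord f))"
    using assms(5) unfolding minimal_groebner_basis_def groebner_basis_def by auto
  have Ipol: "I \<subseteq> polys n" and Imul: "\<forall>p\<in>polys n. \<forall>f\<in>I. p * f \<in> I"
    using assms(4) unfolding is_ideal_def by auto
  have Gpol: "g \<in> polys n" "g \<noteq> 0" if "g \<in> G" for g using that GI Ipol G0 by auto
  have LMg: "LM ord g \<in> monomials n" if "g \<in> G" for g
    using LM_spec[OF adm Gpol[OF that]] Gpol[OF that] unfolding polys_def by auto
  have hge: "deg i (LM ord g) \<le> h i" if "g \<in> G" for g i
    using that finG by (simp add: assms(6))
  have single_pol: "Poly_Mapping.single m (1::'a) \<in> polys n" if "m \<in> monomials n" for m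
    using that unfolding polys_def by auto
  define Hm where "Hm = Max (h ` {..<n})"
  define B where "B = {m::mon. m \<in> monomials n \<and> (\<forall>i<n. deg i m \<le> Hm)}"
  have finB: "finite B"
  proof -
    have "Poly_Mapping.lookup ` B \<subseteq> {f. \<forall>x. (x \<in> {..<n} \<longrightarrow> f x \<in> {..Hm}) \<and> (x \<notin> {..<n} \<longrightarrow> f x = 0)}"
      unfolding B_def by (auto simp: mon_iff deg_def)
    then have "finite (Poly_Mapping.lookup ` B)"
      using finite_subset finite_set_of_finite_funs[of "{..<n}" "{..Hm}" 0] by blast
    moreover have "inj_on Poly_Mapping.lookup B" by (simp add: inj_on_def)
    ultimately show ?thesis using finite_imageD by blast
  qed
  have finG': "finite G'"
  proof -
    have "G' \<subseteq> (\<lambda>p. Poly_Mapping.single (fst p) (1::'a) * snd p) ` (B \<times> G)"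
    proof
      fix p assume "p \<in> G'"
      then obtain m g where mg: "p = Poly_Mapping.single m 1 * g" "g \<in> G" "m \<in> monomials n"
        "\<forall>i<n. deg i m \<le> h i - deg i (LM ord g)" unfolding G'_def by blast
      have "\<forall>i<n. deg i m \<le> Hm"
      proof (intro allI impI)
        fix i assume "i < n"
        then have "h i \<le> Hm" unfolding Hm_def by simp
        then show "deg i m \<le> Hm" using mg(4) \<open>i < n\<close> by fastforce
      qed
      then have "(m, g) \<in> B \<times> G" using mg unfolding B_def by auto
      then show "p \<in> (\<lambda>p. Poly_Mapping.single (fst p) (1::'a) * snd p) ` (B \<times> G)"
        using mg(1) by force
    qed
    then show ?thesis using finB finG finite_subset by blast
  qed
  have G'I: "G' \<subseteq> I"
  proof
    fix p assume "p \<in> G'"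
    then obtain m g where mg: "p = Poly_Mapping.single m 1 * g" "g \<in> G" "m \<in> monomials n"
      unfolding G'_def by blast
    then show "p \<in> I" using Imul single_pol GI by blast
  qed
  have Uprop: "v \<in> monomials n \<and> (\<forall>i<n. deg i v \<le> h i)" if vin: "v \<in> U" for v
  proof -
    obtain p where "p \<in> G'" "v = LM ord p" using vin unfolding U_def by blast
    then obtain m g where mg: "v = LM ord (Poly_Mapping.single m 1 * g)" "g \<in> G" "m \<in> monomials n"
      "\<forall>i<n. deg i m \<le> h i - deg i (LM ord g)" unfolding G'_def by blast
    have v: "v = m + LM ord g" using mg LM_single_mult[OF adm mg(3) Gpol[OF mg(2)]] by simp
    have "v \<in> monomials n" using v monomials_add mg LMg by blast
    moreover have "deg i v \<le> h i" if "i < n" for i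
      proof -
      have "deg i m \<le> h i - deg i (LM ord g)" using mg(4) that by blast
      then show ?thesis using hge[OF mg(2), of i] v by (simp add: deg_def lookup_add)
    qed
    ultimately show ?thesis by blast
  qed
  have rho_n: "\<rho> j < n" if "j < n" for j using assms(2) that unfolding bij_betw_def by auto
  have rho_surj: "\<exists>j<n. \<rho> j = k" if "k < n" for k
    using assms(2) that unfolding bij_betw_def by (metis imageE lessThan_iff)
  have main: "\<exists>g\<in>G'. L_divides n sq \<rho> U (LM ord g) (LM ord f)" if f: "f \<in> I" "f \<noteq> 0" for f
  proof -
    define w where "w = LM ord f"
    have fpol: "f \<in> polys n" using f Ipol by auto
    have wm: "w \<in> monomials n"
      using LM_spec[OF adm fpol f(2)] fpol unfolding w_def polys_def by auto
    obtain g where g: "g \<in> G" "mdvd (LM ord g) w" using GB f unfolding w_def by blast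
    define e :: mon where "e = Abs_poly_mapping (\<lambda>i. Poly_Mapping.lookup w i - h i)"
    have "{i. Poly_Mapping.lookup w i - h i \<noteq> 0} \<subseteq> {i. Poly_Mapping.lookup w i \<noteq> 0}" by auto
    then have "finite {i. Poly_Mapping.lookup w i - h i \<noteq> 0}" using finite_lookup finite_subset by blast
    then have le: "Poly_Mapping.lookup e i = Poly_Mapping.lookup w i - h i" for i
      unfolding e_def by simp
    define u where "u = w - e"
    have lu: "Poly_Mapping.lookup u i = min (Poly_Mapping.lookup w i) (h i)" for i
      unfolding u_def by (simp add: lookup_minus le)
    define m0 where "m0 = u - LM ord g"
    have lm0: "Poly_Mapping.lookup m0 i = min (Poly_Mapping.lookup w i) (h i) - Poly_Mapping.lookup (LM ord g) i" for i
      unfolding m0_def by (simp add: lookup_minus lu)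
    have m0m: "m0 \<in> monomials n" using wm by (simp add: mon_iff lm0)
    have m0b: "\<forall>i<n. deg i m0 \<le> h i - deg i (LM ord g)" by (simp add: deg_def lm0 diff_le_mono)
    define p where "p = Poly_Mapping.single m0 (1::'a) * g"
    have pG': "p \<in> G'" unfolding G'_def p_def using g m0m m0b by blast
    have LMp: "LM ord p = u"
    proof -
      have "LM ord p = m0 + LM ord g" unfolding p_def using LM_single_mult[OF adm m0m Gpol[OF g(1)]] by simp
      also have "\<dots> = u"
      proof (rule poly_mapping_eqI)
        fix i
        have "Poly_Mapping.lookup (LM ord g) i \<le> Poly_Mapping.lookup w i" using g(2) unfolding mdvd_def by auto
        moreover have "Poly_Mapping.lookup (LM ord g) i \<le> h i" using hge[OF g(1), of i] by (simp add: deg_def)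
        ultimately show "Poly_Mapping.lookup (m0 + LM ord g) i = Poly_Mapping.lookup u i"
          by (simp add: lookup_add lm0 lu)
      qed
      finally show ?thesis .
    qed
    have uU: "u \<in> U" unfolding U_def using pG' LMp by (metis image_eqI)
    have wue: "w = u + e"
      by (rule poly_mapping_eqI) (simp add: lookup_add lu le)
    have keys_e: "Poly_Mapping.keys e \<subseteq> M_L n sq \<rho> u U"
    proof
      fix i assume i: "i \<in> Poly_Mapping.keys e"
      then have wi: "Poly_Mapping.lookup w i > h i" by (simp add: in_keys_iff le)
      then have "i < n" using wm unfolding mon_iff by (metis not_le not_less0)
      have ui: "deg i u = h i" using wi by (simp add: deg_def lu)
      have "i \<notin> NM2 n sq \<rho> u v" if v: "v \<in> U - {u}" for v
      proof -
        have vU: "v \<in> monomials n" "\<forall>k<n. deg k v \<le> h k" using Uprop v by auto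
        have um: "u \<in> monomials n" using Uprop uU by auto
        have cases3: "sq u v \<or> (sq v u \<and> mdvd v u) \<or> (\<exists>j. j < n \<and> deg (\<rho> j) u < deg (\<rho> j) v)"
        proof (rule ccontr)
          assume c: "\<not> ?thesis"
          then have all: "\<forall>j<n. deg (\<rho> j) v \<le> deg (\<rho> j) u" by auto
          have dv: "mdvd v u" unfolding mdvd_def
          proof
            fix k show "Poly_Mapping.lookup v k \<le> Poly_Mapping.lookup u k"
            proof (cases "k < n")
              case True
              then obtain j where "j < n" "\<rho> j = k" using rho_surj by blast
              then show ?thesis using all by (auto simp: deg_def)
            next
              case False then show ?thesis using vU(1) by (simp add: mon_iff)
            qed
          qed
          define d where "d = u - v"
          have ud: "u = d + v"
            by (rule poly_mapping_eqI) (use dv in \<open>simp add: d_def lookup_add lookup_minus mdvd_def\<close>)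
          have dm: "d \<in> monomials n" using um by (simp add: d_def mon_iff lookup_minus)
          have d0: "d \<noteq> 0" using v ud by auto
          have zm: "(0::mon) \<in> monomials n" by (simp add: monomials_def)
          from assms(3) show False
          proof
            assume a: "admissible n sq"
            then have "sq 0 d" using dm d0 by (rule adm_zero)
            then have "sq (0 + v) (d + v)" using adm_mult[OF a zm dm vU(1)] by blast
            then have "sq v u" using ud by simp
            then show False using c dv by blast
          next
            assume a: "admissible n (\<lambda>u v. sq v u)"
            then have "sq d 0" using adm_zero[OF a dm d0] by simp
            then have "sq (d + v) (0 + v)" using adm_mult[OF a zm dm vU(1)] by simp
            then have "sq u v" using ud by simp
            then show False using c by blast
          qed
        qed
        show ?thesis
        proof (cases "sq u v \<or> (sq v u \<and> mdvd v u)")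
          case True then show ?thesis unfolding NM2_def by simp
        next
          case False
          then have ex: "\<exists>j. j < n \<and> deg (\<rho> j) u < deg (\<rho> j) v" using cases3 by blast
          define j0 where "j0 = (LEAST j. j < n \<and> deg (\<rho> j) u < deg (\<rho> j) v)"
          have j0: "j0 < n \<and> deg (\<rho> j0) u < deg (\<rho> j0) v"
            unfolding j0_def using ex by (rule LeastI_ex)
          have "\<rho> j0 \<noteq> i"
          proof
            assume "\<rho> j0 = i"
            then have "h i < deg i v" using j0 ui by simp
            then show False using vU(2) \<open>i < n\<close> by fastforce
          qed
          then show ?thesis using False unfolding NM2_def j0_def by simp
        qed
      qed
      then show "i \<in> M_L n sq \<rho> u U" unfolding M_L_def NM_L_def using \<open>i < n\<close> by blast
    qed
    have "L_divides n sq \<rho> U (LM ord p) (LM ord f)"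
      unfolding L_divides_def LMp w_def[symmetric]
      proof (intro exI conjI)
        show "Poly_Mapping.keys e \<subseteq> M_L n sq \<rho> u U" by (rule keys_e)
        show "w = u + e" by (rule wue)
      qed
    then show ?thesis using pG' by blast
  qed
  have "L_involutive_basis n sq \<rho> ord G' I"
    unfolding L_involutive_basis_def U_def[symmetric]
  proof (intro conjI ballI impI)
    show "finite G'" by (rule finG')
    show "G' \<subseteq> I" by (rule G'I)
    fix f assume "f \<in> I" "f \<noteq> 0"
    then show "\<exists>g\<in>G'. L_divides n sq \<rho> U (LM ord g) (LM ord f)" by (rule main)
  qed
  then show ?thesis unfolding G'_def .
qed

end
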